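(* Fix $a>0$ and $\mu>0$. For $\beta>0$, let $W$ be a standard Brownian motion and let $q^+$ be the solution of $\mathrm{d}q^+(t)=\mathrm{d}W(t)+\frac14\big(a-e^{q^+(t)/\beta}-e^{-(q^+(t)+t/4+\mu)/\beta}\big)\mathrm{d}t$ started from $q^+(0)=+\infty$, and let $\xi^+$ be its first explosion time to $-\infty$. Then for $\beta$ small enough, for all $t>0$, $\mathbb{P}(\xi^+>t)\geq 1-4e^{-\mu^2/(32t)}$. *)

theory Defs
  imports "HOL-Probability.Probability"
begin

definition std_BM :: "'a measure \<Rightarrow> (real \<Rightarrow> 'a \<Rightarrow> real) \<Rightarrow> bool" where
  "std_BM M W \<longleftrightarrow>
     prob_space M \<and>
     (\<forall>t\<ge>0. W t \<in> borel_measurable M) \<and>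
     (\<forall>\<omega>\<in>space M. W 0 \<omega> = 0) \<and>
     (AE \<omega> in M. continuous_on {0..} (\<lambda>t. W t \<omega>)) \<and>
     (\<forall>s t. 0 \<le> s \<and> s < t \<longrightarrow>
        distributed M lborel (\<lambda>\<omega>. W t \<omega> - W s \<omega>)
          (\<lambda>x. ennreal (normal_density 0 (sqrt (t - s)) x))) \<and>
     (\<forall>(ts :: nat \<Rightarrow> real) n. 0 \<le> ts 0 \<and> strict_mono ts \<longrightarrow>
        prob_space.indep_vars M (\<lambda>_. borel)
          (\<lambda>i \<omega>. W (ts (Suc i)) \<omega> - W (ts i) \<omega>) {..<n})"

definition drift :: "real \<Rightarrow> real \<Rightarrow> real \<Rightarrow> real \<Rightarrow> real \<Rightarrow> real" where
  "drift a \<mu> \<beta> r x = (a - exp (x / \<beta>) - exp (- (x + r / 4 + \<mu>) / \<beta>)) / 4"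

text \<open>Since the noise is additive, the SDE is the pathwise integral equation below.\<close>
definition entrance_sol ::
  "real \<Rightarrow> real \<Rightarrow> real \<Rightarrow> 'a measure \<Rightarrow> (real \<Rightarrow> 'a \<Rightarrow> real)
     \<Rightarrow> (real \<Rightarrow> 'a \<Rightarrow> real) \<Rightarrow> ('a \<Rightarrow> ereal) \<Rightarrow> bool" where
  "entrance_sol a \<mu> \<beta> M W q \<xi> \<longleftrightarrow>
     \<xi> \<in> borel_measurable M \<and>
     (AE \<omega> in M.
        0 < \<xi> \<omega> \<and>
        continuous_on {t. 0 < t \<and> ereal t < \<xi> \<omega>} (\<lambda>t. q t \<omega>) \<and>
        (\<forall>s t. 0 < s \<and> s \<le> t \<and> ereal t < \<xi> \<omega> \<longrightarrow>
           q t \<omega> = q s \<omega> + (W t \<omega> - W s \<omega>)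
                     + integral {s..t} (\<lambda>r. drift a \<mu> \<beta> r (q r \<omega>))) \<and>
        filterlim (\<lambda>t. q t \<omega>) at_top (at_right 0) \<and>
        (\<xi> \<omega> < \<infinity> \<longrightarrow>
           filterlim (\<lambda>t. q t \<omega>) at_bot (at_left (real_of_ereal (\<xi> \<omega>)))))"

end

theory Submission
  imports Defs
begin


lemma normal_mgf_pointwise:
  assumes "0 < T"
  shows "normal_density 0 (sqrt T) x * exp (\<theta> * x) = exp (\<theta>\<^sup>2 * T / 2) * normal_density (\<theta> * T) (sqrt T) x"
proof -
  have s: "(sqrt T)\<^sup>2 = T" using assms by simp
  have e: "- (x - 0)\<^sup>2 / (2 * T) + \<theta> * x = \<theta>\<^sup>2 * T / 2 + (- (x - \<theta> * T)\<^sup>2 / (2 * T))"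
  proof -
    have "(x - \<theta> * T)\<^sup>2 = x\<^sup>2 - 2 * \<theta> * T * x + \<theta>\<^sup>2 * T\<^sup>2" by (simp add: power2_eq_square algebra_simps)
    then show ?thesis using assms by (simp add: divide_simps power2_eq_square)
  qed
  have "normal_density 0 (sqrt T) x * exp (\<theta> * x) = 1 / sqrt (2 * pi * T) * exp (- (x - 0)\<^sup>2 / (2 * T) + \<theta> * x)"
    unfolding normal_density_def s exp_add by (simp only: mult.assoc)
  also have "\<dots> = exp (\<theta>\<^sup>2 * T / 2) * normal_density (\<theta> * T) (sqrt T) x"
    unfolding normal_density_def s e exp_add by (simp only: mult_ac)
  finally show ?thesis .
qed

lemma nn_integral_normal_density:
  assumes "0 < s"
  shows "(\<integral>\<^sup>+x. ennreal (normal_density m s x) \<partial>lborel) = 1"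
  using assms by (subst nn_integral_eq_integral) auto

lemma normal_mgf:
  assumes D: "distributed M lborel Y (\<lambda>x. ennreal (normal_density 0 (sqrt T) x))" and T: "0 < T"
  shows "(\<integral>\<^sup>+\<omega>. ennreal (exp (\<theta> * Y \<omega>)) \<partial>M) = ennreal (exp (\<theta>\<^sup>2 * T / 2))"
proof -
  have "(\<integral>\<^sup>+\<omega>. ennreal (exp (\<theta> * Y \<omega>)) \<partial>M) = (\<integral>\<^sup>+x. ennreal (normal_density 0 (sqrt T) x) * ennreal (exp (\<theta> * x)) \<partial>lborel)"
    using distributed_nn_integral[OF D, of "\<lambda>x. ennreal (exp (\<theta> * x))"] by simp
  also have "\<dots> = (\<integral>\<^sup>+x. ennreal (exp (\<theta>\<^sup>2 * T / 2)) * ennreal (normal_density (\<theta> * T) (sqrt T) x) \<partial>lborel)"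
    by (intro nn_integral_cong) (simp add: ennreal_mult''[symmetric] normal_mgf_pointwise[OF T])
  also have "\<dots> = ennreal (exp (\<theta>\<^sup>2 * T / 2)) * (\<integral>\<^sup>+x. ennreal (normal_density (\<theta> * T) (sqrt T) x) \<partial>lborel)"
    by (rule nn_integral_cmult) auto
  also have "\<dots> = ennreal (exp (\<theta>\<^sup>2 * T / 2))"
    using T by (simp add: nn_integral_normal_density)
  finally show ?thesis .
qed



lemma std_BM_facts:
  assumes "std_BM M W"
  shows "prob_space M" "\<And>t. 0 \<le> t \<Longrightarrow> W t \<in> borel_measurable M" "\<And>\<omega>. \<omega> \<in> space M \<Longrightarrow> W 0 \<omega> = 0"
    "AE \<omega> in M. continuous_on {0..} (\<lambda>t. W t \<omega>)"
    "\<And>s t. 0 \<le> s \<Longrightarrow> s < t \<Longrightarrow> distributed M lborel (\<lambda>\<omega>. W t \<omega> - W s \<omega>)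
          (\<lambda>x. ennreal (normal_density 0 (sqrt (t - s)) x))"
    "\<And>ts n. 0 \<le> ts 0 \<Longrightarrow> strict_mono ts \<Longrightarrow> prob_space.indep_vars M (\<lambda>_. borel)
          (\<lambda>i \<omega>. W (ts (Suc i)) \<omega> - W (ts i) \<omega>) {..<n}"
  using assms unfolding std_BM_def by blast+

lemma indep_block:
  assumes BM: "std_BM M W" and tt: "strict_mono tt" "tt 0 = 0" and kN: "k < N"
  shows "prob_space.indep_var M (PiM {..<k} (\<lambda>_. borel)) (\<lambda>\<omega>. restrict (\<lambda>i. W (tt (Suc i)) \<omega> - W (tt i) \<omega>) {..<k})
            (PiM {k} (\<lambda>_. borel)) (\<lambda>\<omega>. restrict (\<lambda>i. W (tt N) \<omega> - W (tt k) \<omega>) {k})"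
proof -
  interpret prob_space M using std_BM_facts(1)[OF BM] .
  define ts where "ts i = (if i \<le> k then tt i else tt N + real (i - Suc k))" for i
  have "tt k < tt N" using tt(1) kN by (simp add: strict_mono_less)
  have sm: "strict_mono ts"
  proof (rule strict_monoI_Suc)
    fix i show "ts i < ts (Suc i)"
      using \<open>tt k < tt N\<close> tt(1) apply (auto simp: ts_def strict_mono_Suc_iff le_Suc_eq Suc_diff_le)
      by (subgoal_tac "i = k") auto
  qed
  have "0 \<le> ts 0" using tt by (simp add: ts_def)
  from std_BM_facts(6)[OF BM this sm, of "Suc k"]
  have ind: "indep_vars (\<lambda>_. borel) (\<lambda>i \<omega>. W (ts (Suc i)) \<omega> - W (ts i) \<omega>) {..<Suc k}" .
  have iv: "indep_var (PiM {..<k} (\<lambda>_. borel)) (\<lambda>\<omega>. restrict (\<lambda>i. W (ts (Suc i)) \<omega> - W (ts i) \<omega>) {..<k})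
      (PiM {k} (\<lambda>_. borel)) (\<lambda>\<omega>. restrict (\<lambda>i. W (ts (Suc i)) \<omega> - W (ts i) \<omega>) {k})"
    by (rule indep_var_restrict[OF ind]) auto
  have e1: "(\<lambda>\<omega>. restrict (\<lambda>i. W (ts (Suc i)) \<omega> - W (ts i) \<omega>) {..<k})
      = (\<lambda>\<omega>. restrict (\<lambda>i. W (tt (Suc i)) \<omega> - W (tt i) \<omega>) {..<k})"
    by (auto simp: fun_eq_iff ts_def restrict_def)
  have e2: "(\<lambda>\<omega>. restrict (\<lambda>i. W (ts (Suc i)) \<omega> - W (ts i) \<omega>) {k})
      = (\<lambda>\<omega>. restrict (\<lambda>i. W (tt N) \<omega> - W (tt k) \<omega>) {k})"
    by (auto simp: fun_eq_iff ts_def restrict_def)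
  show ?thesis using iv unfolding e1 e2 .
qed



lemma psum_if: "(j::nat) \<le> k \<Longrightarrow> (\<Sum>i<k. if i < j then f i else 0) = (\<Sum>i<j. (f i :: real))"
proof -
  assume "j \<le> k"
  then have "{..<k} \<inter> {i. i < j} = {..<j}" by auto
  then show ?thesis by (simp add: sum.If_cases)
qed

lemma doob_exp:
  fixes tt :: "nat \<Rightarrow> real" and N :: nat and W :: "real \<Rightarrow> 'a \<Rightarrow> real"
  assumes BM: "std_BM M W" and tt: "strict_mono tt" "tt 0 = 0" and N: "0 < N"
    and sg: "\<sigma> = 1 \<or> \<sigma> = -1" and c: "0 \<le> c" and l: "0 \<le> l"
  shows "emeasure M {\<omega>\<in>space M. \<exists>j\<in>{..N}. c < \<sigma> * W (tt j) \<omega>} \<le> ennreal (exp (- l*c + l\<^sup>2 * tt N / 2))"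
proof -
  interpret prob_space M using std_BM_facts(1)[OF BM] .
  have ttnn: "0 \<le> tt j" for j using tt strict_mono_leD[OF tt(1), of 0 j] by simp
  have [measurable]: "W (tt j) \<in> borel_measurable M" for j using std_BM_facts(2)[OF BM ttnn] .
  have [measurable]: "W 0 \<in> borel_measurable M" using std_BM_facts(2)[OF BM, of 0] by simp
  have W0: "\<And>\<omega>. \<omega> \<in> space M \<Longrightarrow> W 0 \<omega> = 0" using std_BM_facts(3)[OF BM] .
  have sg2: "\<sigma>\<^sup>2 = 1" using sg by auto
  define X where "X j \<omega> = \<sigma> * W (tt j) \<omega>" for j \<omega>
  have [measurable]: "X j \<in> borel_measurable M" for j unfolding X_def by measurable
  define A where "A k = {\<omega>\<in>space M. c < X k \<omega> \<and> (\<forall>j\<in>{..<k}. X j \<omega> \<le> c)}" for k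
  have [measurable]: "A k \<in> sets M" for k unfolding A_def by measurable
  define E where "E = {\<omega>\<in>space M. \<exists>j\<in>{..N}. c < X j \<omega>}"
  have [measurable]: "E \<in> sets M" unfolding E_def by measurable
  define Z where "Z k \<omega> = indicator (A k) \<omega> * exp (l * (X k \<omega> - c))" for k \<omega>
  define V where "V k \<omega> = indicator (A k) \<omega> * exp (l * (X N \<omega> - c))" for k \<omega>
  have [measurable]: "Z k \<in> borel_measurable M" for k unfolding Z_def by measurable
  have [measurable]: "V k \<in> borel_measurable M" for k unfolding V_def by measurable
  have Adisj: "k = k'" if "\<omega> \<in> A k" "\<omega> \<in> A k'" for \<omega> k k'
  proof (rule ccontr)
    assume "k \<noteq> k'"
    then consider "k < k'" | "k' < k" by linarith
    then show False using that by cases (auto simp: A_def; meson lessThan_iff not_le)+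
  qed
  have step1: "indicator E \<omega> \<le> (\<Sum>k\<le>N. ennreal (Z k \<omega>))" if \<omega>: "\<omega> \<in> space M" for \<omega>
  proof (cases "\<omega> \<in> E")
    case False then show ?thesis by simp
  next
    case True
    then obtain j where j: "j \<le> N" "c < X j \<omega>" by (auto simp: E_def)
    define k where "k = (LEAST j. c < X j \<omega>)"
    have k1: "c < X k \<omega>" unfolding k_def by (rule LeastI[of _ j]) (rule j(2))
    have k2: "k \<le> j" unfolding k_def by (rule Least_le) (rule j(2))
    have k3: "X i \<omega> \<le> c" if "i < k" for i using not_less_Least[OF that[unfolded k_def]] by simp
    have "\<omega> \<in> A k" using \<omega> k1 k3 by (auto simp: A_def)
    then have "1 \<le> Z k \<omega>" using k1 l by (simp add: Z_def)
    then have "indicator E \<omega> \<le> ennreal (Z k \<omega>)" using True by simp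
    also have "\<dots> \<le> (\<Sum>k\<le>N. ennreal (Z k \<omega>))"
      by (rule member_le_sum) (use k2 j in auto)
    finally show ?thesis .
  qed
  have step3: "(\<Sum>k\<le>N. ennreal (V k \<omega>)) \<le> ennreal (exp (l * (X N \<omega> - c)))" for \<omega>
  proof (cases "\<exists>k\<le>N. \<omega> \<in> A k")
    case True
    then obtain k0 where k0: "k0 \<le> N" "\<omega> \<in> A k0" by auto
    have "(\<Sum>k\<le>N. ennreal (V k \<omega>)) = (\<Sum>k\<le>N. if k = k0 then ennreal (exp (l * (X N \<omega> - c))) else 0)"
      by (rule sum.cong) (use k0 Adisj in \<open>auto simp: V_def indicator_def\<close>)
    also have "\<dots> = ennreal (exp (l * (X N \<omega> - c)))" using k0 by simp
    finally show ?thesis by simp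
  next
    case False
    then have "(\<Sum>k\<le>N. ennreal (V k \<omega>)) = 0" by (auto simp: V_def)
    then show ?thesis by simp
  qed
  have step4: "(\<integral>\<^sup>+\<omega>. ennreal (exp (l * (X N \<omega> - c))) \<partial>M) = ennreal (exp (- l*c + l\<^sup>2 * tt N / 2))"
  proof -
    have "0 < tt N" using tt strict_mono_less[OF tt(1), of 0 N] N by simp
    have D: "distributed M lborel (\<lambda>\<omega>. W (tt N) \<omega> - W 0 \<omega>) (\<lambda>x. ennreal (normal_density 0 (sqrt (tt N)) x))"
      using std_BM_facts(5)[OF BM, of 0 "tt N"] \<open>0 < tt N\<close> by simp
    have "(\<integral>\<^sup>+\<omega>. ennreal (exp (l * (X N \<omega> - c))) \<partial>M)
        = (\<integral>\<^sup>+\<omega>. ennreal (exp (- l * c)) * ennreal (exp ((l * \<sigma>) * (W (tt N) \<omega> - W 0 \<omega>))) \<partial>M)"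
      by (rule nn_integral_cong) (auto simp: W0 X_def ennreal_mult''[symmetric] exp_add[symmetric] algebra_simps)
    also have "\<dots> = ennreal (exp (- l * c)) * (\<integral>\<^sup>+\<omega>. ennreal (exp ((l * \<sigma>) * (W (tt N) \<omega> - W 0 \<omega>))) \<partial>M)"
      by (rule nn_integral_cmult) measurable
    also have "\<dots> = ennreal (exp (- l * c)) * ennreal (exp ((l * \<sigma>)\<^sup>2 * tt N / 2))"
      using normal_mgf[OF D \<open>0 < tt N\<close>] by simp
    also have "\<dots> = ennreal (exp (- l*c + l\<^sup>2 * tt N / 2))"
      by (simp add: ennreal_mult''[symmetric] exp_add[symmetric] power_mult_distrib sg2)
    finally show ?thesis .
  qed
  have step2: "(\<integral>\<^sup>+\<omega>. ennreal (Z k \<omega>) \<partial>M) \<le> (\<integral>\<^sup>+\<omega>. ennreal (V k \<omega>) \<partial>M)" if kN: "k \<le> N" for k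
  proof (cases "k = N")
    case True then show ?thesis by (simp add: Z_def V_def)
  next
    case False
    then have kN': "k < N" using kN by simp
    have "tt k < tt N" using tt(1) kN' by (simp add: strict_mono_less)
    define Y where "Y \<omega> = W (tt N) \<omega> - W (tt k) \<omega>" for \<omega>
    define R1 where "R1 \<omega> = restrict (\<lambda>i. W (tt (Suc i)) \<omega> - W (tt i) \<omega>) {..<k}" for \<omega>
    define R2 where "R2 \<omega> = restrict (\<lambda>i. W (tt N) \<omega> - W (tt k) \<omega>) {k}" for \<omega>
    define P where "P j x = \<sigma> * (\<Sum>i<k. if i < j then x i else 0)" for j and x :: "nat \<Rightarrow> real"
    define F where "F x = (if c < P k x \<and> (\<forall>j\<in>{..<k}. P j x \<le> c) then exp (l * (P k x - c)) else 0)" for x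
    define H where "H x = exp (l * \<sigma> * x k)" for x :: "nat \<Rightarrow> real"
    have iv: "indep_var (PiM {..<k} (\<lambda>_. borel)) R1 (PiM {k} (\<lambda>_. borel)) R2"
      unfolding R1_def R2_def by (rule indep_block[OF BM tt kN'])
    have Fm: "(\<lambda>x. ennreal (F x)) \<in> borel_measurable (PiM {..<k} (\<lambda>_. borel))" unfolding F_def P_def by measurable
    have Hm: "(\<lambda>x. ennreal (H x)) \<in> borel_measurable (PiM {k} (\<lambda>_. borel))" unfolding H_def by measurable
    have iv2: "indep_var borel ((\<lambda>x. ennreal (F x)) \<circ> R1) borel ((\<lambda>x. ennreal (H x)) \<circ> R2)" by (rule indep_var_compose[OF iv Fm Hm])
    have cb: "case_bool borel borel = (\<lambda>_::bool. borel::ennreal measure)" by (auto simp: fun_eq_iff split: bool.split)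
    have ivs: "indep_vars (\<lambda>_. borel) (case_bool ((\<lambda>x. ennreal (F x)) \<circ> R1) ((\<lambda>x. ennreal (H x)) \<circ> R2)) UNIV"
      using iv2 unfolding indep_var_def cb .
    have Fnn: "0 \<le> F x" for x by (simp add: F_def)
    have Hnn: "0 \<le> H x" for x by (simp add: H_def)
    have prod0: "(\<integral>\<^sup>+\<omega>. ennreal (F (R1 \<omega>)) * ennreal (H (R2 \<omega>)) \<partial>M) = (\<integral>\<^sup>+\<omega>. ennreal (F (R1 \<omega>)) \<partial>M) * (\<integral>\<^sup>+\<omega>. ennreal (H (R2 \<omega>)) \<partial>M)"
      using indep_vars_nn_integral[of UNIV "case_bool ((\<lambda>x. ennreal (F x)) \<circ> R1) ((\<lambda>x. ennreal (H x)) \<circ> R2)"] ivs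
      by (auto simp: UNIV_bool mult.commute comp_def split: bool.split)
    have prod: "(\<integral>\<^sup>+\<omega>. ennreal ((F \<circ> R1) \<omega> * (H \<circ> R2) \<omega>) \<partial>M) = (\<integral>\<^sup>+\<omega>. ennreal ((F \<circ> R1) \<omega>) \<partial>M) * (\<integral>\<^sup>+\<omega>. ennreal ((H \<circ> R2) \<omega>) \<partial>M)"
      using prod0 Fnn Hnn by (simp add: ennreal_mult)
    have eqP: "P j (R1 \<omega>) = X j \<omega>" if "j \<le> k" "\<omega> \<in> space M" for j \<omega>
    proof -
      have "(\<Sum>i<k. if i < j then R1 \<omega> i else 0) = (\<Sum>i<k. if i < j then W (tt (Suc i)) \<omega> - W (tt i) \<omega> else 0)"
        by (rule sum.cong) (auto simp: R1_def)
      also have "\<dots> = (\<Sum>i<j. W (tt (Suc i)) \<omega> - W (tt i) \<omega>)" by (rule psum_if[OF that(1)])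
      also have "\<dots> = W (tt j) \<omega> - W (tt 0) \<omega>" by (rule sum_lessThan_telescope[of "\<lambda>i. W (tt i) \<omega>"])
      also have "\<dots> = W (tt j) \<omega>" using tt(2) W0[OF that(2)] by simp
      finally show ?thesis by (simp add: P_def X_def)
    qed
    have eqZ: "(F \<circ> R1) \<omega> = Z k \<omega>" if "\<omega> \<in> space M" for \<omega>
    proof -
      have b: "(\<forall>j\<in>{..<k}. P j (R1 \<omega>) \<le> c) \<longleftrightarrow> (\<forall>j\<in>{..<k}. X j \<omega> \<le> c)"
        using eqP[OF _ that] by auto
      show ?thesis using b eqP[OF _ that, of k] that by (simp add: F_def Z_def A_def indicator_def)
    qed
    have eqH: "(H \<circ> R2) \<omega> = exp ((l * \<sigma>) * Y \<omega>)" for \<omega> by (simp add: H_def R2_def Y_def mult.assoc)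
    have eqV: "V k \<omega> = Z k \<omega> * exp ((l * \<sigma>) * Y \<omega>)" for \<omega>
    proof -
      have "l * (X N \<omega> - c) = l * (X k \<omega> - c) + (l * \<sigma>) * Y \<omega>" by (simp add: X_def Y_def algebra_simps)
      then show ?thesis by (simp add: V_def Z_def exp_add mult.assoc)
    qed
    have D: "distributed M lborel Y (\<lambda>x. ennreal (normal_density 0 (sqrt (tt N - tt k)) x))"
      unfolding Y_def using std_BM_facts(5)[OF BM ttnn[of k] \<open>tt k < tt N\<close>] .
    have mgf: "(\<integral>\<^sup>+\<omega>. ennreal (exp ((l * \<sigma>) * Y \<omega>)) \<partial>M) = ennreal (exp ((l * \<sigma>)\<^sup>2 * (tt N - tt k) / 2))"
      by (rule normal_mgf[OF D]) (use \<open>tt k < tt N\<close> in simp)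
    have ge1: "1 \<le> ennreal (exp ((l * \<sigma>)\<^sup>2 * (tt N - tt k) / 2))"
      using \<open>tt k < tt N\<close> by (simp add: ennreal_leI)
    have "(\<integral>\<^sup>+\<omega>. ennreal (Z k \<omega>) \<partial>M) = (\<integral>\<^sup>+\<omega>. ennreal (Z k \<omega>) \<partial>M) * 1" by simp
    also have "\<dots> \<le> (\<integral>\<^sup>+\<omega>. ennreal (Z k \<omega>) \<partial>M) * (\<integral>\<^sup>+\<omega>. ennreal (exp ((l * \<sigma>) * Y \<omega>)) \<partial>M)"
      unfolding mgf by (rule mult_left_mono[OF ge1]) simp
    also have "\<dots> = (\<integral>\<^sup>+\<omega>. ennreal ((F \<circ> R1) \<omega>) \<partial>M) * (\<integral>\<^sup>+\<omega>. ennreal ((H \<circ> R2) \<omega>) \<partial>M)"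
      by (intro arg_cong2[where f="(*)"] nn_integral_cong) (simp_all add: eqZ[symmetric] eqH[symmetric] del: comp_apply)
    also have "\<dots> = (\<integral>\<^sup>+\<omega>. ennreal ((F \<circ> R1) \<omega> * (H \<circ> R2) \<omega>) \<partial>M)" by (rule prod[symmetric])
    also have "\<dots> = (\<integral>\<^sup>+\<omega>. ennreal (V k \<omega>) \<partial>M)"
      by (rule nn_integral_cong) (simp add: eqZ eqH eqV del: comp_apply)
    finally show ?thesis .
  qed
  have "emeasure M E = (\<integral>\<^sup>+\<omega>. indicator E \<omega> \<partial>M)" by simp
  also have "\<dots> \<le> (\<integral>\<^sup>+\<omega>. (\<Sum>k\<le>N. ennreal (Z k \<omega>)) \<partial>M)" by (rule nn_integral_mono) (rule step1)
  also have "\<dots> = (\<Sum>k\<le>N. (\<integral>\<^sup>+\<omega>. ennreal (Z k \<omega>) \<partial>M))" by (rule nn_integral_sum) auto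
  also have "\<dots> \<le> (\<Sum>k\<le>N. (\<integral>\<^sup>+\<omega>. ennreal (V k \<omega>) \<partial>M))" by (rule sum_mono) (rule step2, simp)
  also have "\<dots> = (\<integral>\<^sup>+\<omega>. (\<Sum>k\<le>N. ennreal (V k \<omega>)) \<partial>M)" by (rule nn_integral_sum[symmetric]) auto
  also have "\<dots> \<le> (\<integral>\<^sup>+\<omega>. ennreal (exp (l * (X N \<omega> - c))) \<partial>M)" by (rule nn_integral_mono) (rule step3)
  also have "\<dots> = ennreal (exp (- l*c + l\<^sup>2 * tt N / 2))" by (rule step4)
  finally show ?thesis unfolding E_def X_def .
qed



lemma doob_meas:
  fixes W :: "real \<Rightarrow> 'a \<Rightarrow> real"
  assumes BM: "std_BM M W" and t: "0 < t" and c: "0 < c" and sg: "\<sigma> = 1 \<or> \<sigma> = -1"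
  shows "measure M {\<omega>\<in>space M. \<exists>j\<in>{..(2::nat)^m}. c < \<sigma> * W (real j * t / 2^m) \<omega>} \<le> exp (- c\<^sup>2 / (2 * t))"
proof -
  interpret prob_space M using std_BM_facts(1)[OF BM] .
  define tt where "tt j = real j * t / 2^m" for j :: nat
  have sm: "strict_mono tt" unfolding tt_def using t by (intro strict_monoI) (simp add: divide_strict_right_mono)
  have "emeasure M {\<omega>\<in>space M. \<exists>j\<in>{..(2::nat)^m}. c < \<sigma> * W (tt j) \<omega>} \<le> ennreal (exp (- (c/t)*c + (c/t)\<^sup>2 * tt (2^m) / 2))"
    by (rule doob_exp[OF BM sm _ _ sg]) (use c t in \<open>auto simp: tt_def\<close>)
  also have "- (c/t)*c + (c/t)\<^sup>2 * tt (2^m) / 2 = - c\<^sup>2 / (2 * t)"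
    using t by (simp add: tt_def field_simps power2_eq_square)
  finally show ?thesis by (simp add: emeasure_eq_measure tt_def)
qed

lemma grid_bound:
  fixes W :: "real \<Rightarrow> 'a \<Rightarrow> real"
  assumes BM: "std_BM M W" and t: "0 < t" and c: "0 < c"
  shows "1 - 2 * exp (- c\<^sup>2 / (2 * t)) \<le> measure M {\<omega>\<in>space M. \<forall>m. \<forall>j\<in>{..(2::nat)^m}. \<bar>W (real j * t / 2^m) \<omega>\<bar> \<le> c}"
proof -
  interpret prob_space M using std_BM_facts(1)[OF BM] .
  have [measurable]: "W (real j * t / 2^m) \<in> borel_measurable M" for j m
    using std_BM_facts(2)[OF BM, of "real j * t / 2^m"] t by simp
  define E where "E m = {\<omega>\<in>space M. \<forall>j\<in>{..(2::nat)^m}. \<bar>W (real j * t / 2^m) \<omega>\<bar> \<le> c}" for m :: nat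
  have Em[measurable]: "E m \<in> sets M" for m unfolding E_def by measurable
  have dec: "decseq E"
  proof (rule decseq_SucI)
    fix m
    show "E (Suc m) \<subseteq> E m"
    proof
      fix \<omega> assume "\<omega> \<in> E (Suc m)"
      then have \<omega>: "\<omega> \<in> space M" "\<And>j. j \<le> 2^Suc m \<Longrightarrow> \<bar>W (real j * t / 2^Suc m) \<omega>\<bar> \<le> c" by (auto simp: E_def)
      have "\<bar>W (real j * t / 2^m) \<omega>\<bar> \<le> c" if "j \<le> 2^m" for j
        using \<omega>(2)[of "2*j"] that by (simp add: field_simps)
      then show "\<omega> \<in> E m" using \<omega> by (auto simp: E_def)
    qed
  qed
  have bnd: "1 - 2 * exp (- c\<^sup>2 / (2 * t)) \<le> measure M (E m)" for m
  proof -
    define B where "B \<sigma> = {\<omega>\<in>space M. \<exists>j\<in>{..(2::nat)^m}. c < \<sigma> * W (real j * t / 2^m) \<omega>}" for \<sigma> :: real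
    have [measurable]: "B \<sigma> \<in> sets M" for \<sigma> unfolding B_def by measurable
    have "space M - E m \<subseteq> B 1 \<union> B (-1)" by (auto simp: E_def B_def abs_if not_le)
    then have "measure M (space M - E m) \<le> measure M (B 1 \<union> B (-1))" by (intro finite_measure_mono) auto
    also have "\<dots> \<le> measure M (B 1) + measure M (B (-1))" by (rule measure_subadditive) auto
    also have "\<dots> \<le> exp (- c\<^sup>2 / (2 * t)) + exp (- c\<^sup>2 / (2 * t))"
      unfolding B_def by (intro add_mono doob_meas[OF BM t c]) auto
    finally show ?thesis using prob_compl[OF Em[of m]] by simp
  qed
  have "(\<lambda>m. measure M (E m)) \<longlonglongrightarrow> measure M (\<Inter>m. E m)"
    by (rule finite_Lim_measure_decseq) (use dec in auto)
  then have "1 - 2 * exp (- c\<^sup>2 / (2 * t)) \<le> measure M (\<Inter>m. E m)"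
    by (rule LIMSEQ_le_const) (use bnd in auto)
  also have "(\<Inter>m. E m) = {\<omega>\<in>space M. \<forall>m. \<forall>j\<in>{..(2::nat)^m}. \<bar>W (real j * t / 2^m) \<omega>\<bar> \<le> c}"
    by (auto simp: E_def)
  finally show ?thesis .
qed



lemma pathwise:
  fixes q w :: "real \<Rightarrow> real"
  assumes mu: "0 < \<mu>" and beta: "0 < \<beta>"
    and dpos: "\<And>r x. -3*\<mu>/4 \<le> x \<Longrightarrow> x \<le> -\<mu>/4 \<Longrightarrow> 0 < r \<Longrightarrow> 0 \<le> drift a \<mu> \<beta> r x"
    and T: "0 < T" "T \<le> t"
    and qc: "continuous_on {r. 0 < r \<and> r < T} q"
    and eq: "\<And>s r. 0 < s \<Longrightarrow> s \<le> r \<Longrightarrow> r < T \<Longrightarrow> q r = q s + (w r - w s) + integral {s..r} (\<lambda>x. drift a \<mu> \<beta> x (q x))"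
    and top: "filterlim q at_top (at_right 0)"
    and bot: "filterlim q at_bot (at_left T)"
    and wb: "\<And>r. 0 \<le> r \<Longrightarrow> r \<le> t \<Longrightarrow> \<bar>w r\<bar> \<le> c" and c: "c < \<mu>/4"
  shows False
proof -
  have "eventually (\<lambda>r. q r \<le> -\<mu>) (at_left T)" using bot by (simp add: filterlim_at_bot)
  moreover have "eventually (\<lambda>r. r \<in> {0<..<T}) (at_left T)" using T(1) by (rule eventually_at_left_real)
  ultimately have "eventually (\<lambda>r. q r \<le> -\<mu> \<and> r \<in> {0<..<T}) (at_left T)" by (rule eventually_conj)
  then have "\<exists>r. q r \<le> -\<mu> \<and> r \<in> {0<..<T}"
    using eventually_happens trivial_limit_at_left_real[of T] by blast
  then obtain u0 where u0: "q u0 \<le> -\<mu>" "0 < u0" "u0 < T" by auto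
  have "eventually (\<lambda>r. 0 \<le> q r) (at_right 0)" using top by (simp add: filterlim_at_top)
  moreover have "eventually (\<lambda>r. r \<in> {0<..<u0}) (at_right 0)" using u0 by (intro eventually_at_right_real)
  ultimately have "eventually (\<lambda>r. 0 \<le> q r \<and> r \<in> {0<..<u0}) (at_right 0)" by (rule eventually_conj)
  then have "\<exists>r. 0 \<le> q r \<and> r \<in> {0<..<u0}"
    using eventually_happens trivial_limit_at_right_real[of 0] by blast
  then obtain p where p: "0 \<le> q p" "0 < p" "p < u0" by auto
  have qcI: "continuous_on {x..y} q" if "p \<le> x" "y \<le> u0" for x y
    by (rule continuous_on_subset[OF qc]) (use that p u0 in auto)
  define S1 where "S1 = {p..u0} \<inter> q -` {..-3*\<mu>/4}"
  have "closed S1" unfolding S1_def by (intro continuous_closed_preimage qcI) auto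
  have "u0 \<in> S1" using u0 mu p by (auto simp: S1_def)
  have "bdd_below S1" by (auto simp: S1_def bdd_below_def)
  define u where "u = Inf S1"
  have "u \<in> S1" unfolding u_def using \<open>closed S1\<close> \<open>u0 \<in> S1\<close> \<open>bdd_below S1\<close> by (intro closed_contains_Inf) auto
  then have u: "p \<le> u" "u \<le> u0" "q u \<le> -3*\<mu>/4" by (auto simp: S1_def)
  have below_u: "-3*\<mu>/4 < q r" if "p \<le> r" "r < u" for r
  proof (rule ccontr)
    assume "\<not> ?thesis"
    then have "r \<in> S1" using that u by (auto simp: S1_def)
    then have "u \<le> r" unfolding u_def using \<open>bdd_below S1\<close> by (rule cInf_lower)
    then show False using that by simp
  qed
  have qu: "q u = -3*\<mu>/4"
  proof -
    obtain x where x: "p \<le> x" "x \<le> u" "q x = -3*\<mu>/4"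
      using IVT2'[of q u "-3*\<mu>/4" p] u p mu qcI[of p u] by auto
    then have "\<not> x < u" using below_u by force
    then show ?thesis using x by simp
  qed
  define S2 where "S2 = {p..u} \<inter> q -` {-\<mu>/4..}"
  have "closed S2" unfolding S2_def by (intro continuous_closed_preimage qcI) (use u in auto)
  have "p \<in> S2" using p u mu by (auto simp: S2_def)
  have "bdd_above S2" by (auto simp: S2_def bdd_above_def)
  define s where "s = Sup S2"
  have "s \<in> S2" unfolding s_def using \<open>closed S2\<close> \<open>p \<in> S2\<close> \<open>bdd_above S2\<close> by (intro closed_contains_Sup) auto
  then have s: "p \<le> s" "s \<le> u" "-\<mu>/4 \<le> q s" by (auto simp: S2_def)
  have above_s: "q r < -\<mu>/4" if "s < r" "r \<le> u" for r
  proof (rule ccontr)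
    assume "\<not> ?thesis"
    then have "r \<in> S2" using that s by (auto simp: S2_def)
    then have "r \<le> s" unfolding s_def using \<open>bdd_above S2\<close> by (rule cSup_upper)
    then show False using that by simp
  qed
  have qs: "q s = -\<mu>/4"
  proof -
    obtain x where x: "s \<le> x" "x \<le> u" "q x = -\<mu>/4"
      using IVT2'[of q u "-\<mu>/4" s] u s qu mu qcI[of s u] by auto
    then have "\<not> s < x" using above_s by force
    then show ?thesis using x by simp
  qed
  have range: "-3*\<mu>/4 \<le> q r \<and> q r \<le> -\<mu>/4" if "s \<le> r" "r \<le> u" for r
  proof -
    have "-3*\<mu>/4 \<le> q r"
      using below_u[of r] qu that s by (cases "r < u") auto
    moreover have "q r \<le> -\<mu>/4"
      using above_s[of r] qs that by (cases "s < r") auto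
    ultimately show ?thesis by simp
  qed
  have cont: "continuous_on {s..u} (\<lambda>x. drift a \<mu> \<beta> x (q x))"
    unfolding drift_def using qcI[OF s(1) u(2)] beta by (intro continuous_intros) auto
  have "0 \<le> integral {s..u} (\<lambda>x. drift a \<mu> \<beta> x (q x))"
    by (rule integral_nonneg[OF integrable_continuous_interval[OF cont]])
       (use range dpos s p in auto)
  moreover have "q u = q s + (w u - w s) + integral {s..u} (\<lambda>x. drift a \<mu> \<beta> x (q x))"
    using eq[of s u] s u u0 p by simp
  moreover have "\<bar>w u\<bar> \<le> c" "\<bar>w s\<bar> \<le> c" using wb[of u] wb[of s] s u u0 p T by auto
  ultimately show False using qu qs c by linarith
qed



lemma dense_bound:
  fixes w :: "real \<Rightarrow> real"
  assumes wc: "continuous_on {0..} w" and t: "0 < t"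
    and g: "\<And>m j. j \<le> (2::nat)^m \<Longrightarrow> \<bar>w (real j * t / 2^m)\<bar> \<le> c"
    and r: "0 \<le> r" "r \<le> t"
  shows "\<bar>w r\<bar> \<le> c"
proof -
  define j where "j m = nat \<lfloor>r * 2^m / t\<rfloor>" for m :: nat
  define rm where "rm m = real (j m) * t / 2^m" for m :: nat
  have fl: "real (j m) \<le> r * 2^m / t" "r * 2^m / t - 1 < real (j m)" for m
  proof -
    have "0 \<le> r * 2^m / t" using r t by simp
    then show "real (j m) \<le> r * 2^m / t" "r * 2^m / t - 1 < real (j m)"
      unfolding j_def by (simp_all add: of_int_floor_le)
  qed
  have jle: "j m \<le> 2^m" for m
  proof -
    have "r * 2^m / t \<le> 2^m" using r t by (simp add: field_simps)
    then have "real (j m) \<le> 2^m" using fl(1)[of m] by linarith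
    then show ?thesis by (simp flip: of_nat_le_iff)
  qed
  have up: "rm m \<le> r" for m
    using fl(1)[of m] t unfolding rm_def by (simp add: field_simps)
  have lo: "r - t * (1/2)^m \<le> rm m" for m
  proof -
    have "(r * 2^m / t - 1) * (t / 2^m) \<le> real (j m) * (t / 2^m)"
      by (rule mult_right_mono) (use fl(2)[of m] t in auto)
    moreover have "(r * 2^m / t - 1) * (t / 2^m) = r - t * (1/2)^m"
      using t by (simp add: field_simps power_one_over)
    ultimately show ?thesis unfolding rm_def by simp
  qed
  have "(\<lambda>m. r - t * (1/2::real)^m) \<longlonglongrightarrow> r - t * 0"
    by (intro tendsto_intros LIMSEQ_power_zero) simp
  then have lim1: "(\<lambda>m. r - t * (1/2::real)^m) \<longlonglongrightarrow> r" by simp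
  have "rm \<longlonglongrightarrow> r"
    by (rule tendsto_sandwich[OF _ _ lim1 tendsto_const]) (use up lo in \<open>auto intro: always_eventually\<close>)
  moreover have "rm m \<in> {0..}" for m using t by (simp add: rm_def)
  ultimately have "(\<lambda>m. w (rm m)) \<longlonglongrightarrow> w r"
    by (intro continuous_on_tendsto_compose[OF wc]) (use r in auto)
  then have "(\<lambda>m. \<bar>w (rm m)\<bar>) \<longlonglongrightarrow> \<bar>w r\<bar>" by (rule tendsto_rabs)
  then show ?thesis
    by (rule LIMSEQ_le_const2) (use g jle in \<open>auto simp: rm_def\<close>)
qed

lemma drift_nonneg:
  assumes a: "0 < a" and mu: "0 < \<mu>" and b: "0 < \<beta>" "\<beta> < \<mu> / (4 * (\<bar>ln (a/2)\<bar> + 1))"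
    and x: "-3*\<mu>/4 \<le> x" "x \<le> -\<mu>/4" and r: "0 < r"
  shows "0 \<le> drift a \<mu> \<beta> r x"
proof -
  define K where "K = \<bar>ln (a/2)\<bar> + 1"
  have K: "0 < K" by (simp add: K_def)
  have "\<beta> * (4 * K) < \<mu>" using b K by (simp add: K_def field_simps)
  then have "K < \<mu> / (4 * \<beta>)" using b by (simp add: field_simps)
  then have "- (\<mu> / (4 * \<beta>)) < ln (a/2)" unfolding K_def by linarith
  then have e: "exp (- (\<mu> / (4 * \<beta>))) < a / 2" using a by (metis exp_less_cancel_iff exp_ln half_gt_zero)
  have "x / \<beta> \<le> - (\<mu> / (4 * \<beta>))" using x b by (simp add: field_simps)
  then have e1: "exp (x / \<beta>) \<le> exp (- (\<mu> / (4 * \<beta>)))" by simp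
  have "- (x + r / 4 + \<mu>) / \<beta> \<le> - (\<mu> / (4 * \<beta>))" using x b r by (simp add: field_simps)
  then have e2: "exp (- (x + r / 4 + \<mu>) / \<beta>) \<le> exp (- (\<mu> / (4 * \<beta>)))" by simp
  have "0 \<le> a - exp (x / \<beta>) - exp (- (x + r / 4 + \<mu>) / \<beta>)" using e e1 e2 by linarith
  then show ?thesis unfolding drift_def by simp
qed



theorem lemma5p1:
  fixes a \<mu> :: real
  assumes "a > 0" and "\<mu> > 0"
  shows "\<exists>\<beta>0>0. \<forall>\<beta>. 0 < \<beta> \<and> \<beta> < \<beta>0 \<longrightarrow>
           (\<forall>(M :: 'a measure) W q \<xi>. std_BM M W \<and> entrance_sol a \<mu> \<beta> M W q \<xi> \<longrightarrow>
              (\<forall>t>0. measure M {\<omega> \<in> space M. ereal t < \<xi> \<omega>}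
                        \<ge> 1 - 4 * exp (- \<mu>\<^sup>2 / (32 * t))))"
proof (intro exI[of _ "\<mu> / (4 * (\<bar>ln (a/2)\<bar> + 1))"] conjI allI impI)
  show "0 < \<mu> / (4 * (\<bar>ln (a/2)\<bar> + 1))" using assms by (simp add: divide_pos_pos add_pos_nonneg)
  fix \<beta> :: real and M :: "'a measure" and W q \<xi> and t :: real
  assume b: "0 < \<beta> \<and> \<beta> < \<mu> / (4 * (\<bar>ln (a/2)\<bar> + 1))"
  assume H: "std_BM M W \<and> entrance_sol a \<mu> \<beta> M W q \<xi>"
  assume t: "0 < t"
  have BM: "std_BM M W" and ES: "entrance_sol a \<mu> \<beta> M W q \<xi>" using H by auto
  interpret prob_space M using std_BM_facts(1)[OF BM] .
  have dpos: "\<And>r x. -3*\<mu>/4 \<le> x \<Longrightarrow> x \<le> -\<mu>/4 \<Longrightarrow> 0 < r \<Longrightarrow> 0 \<le> drift a \<mu> \<beta> r x"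
    using drift_nonneg[OF assms(1,2)] b by blast
  define v where "v = max (\<mu>\<^sup>2/16 - 2 * t * ln 2) (\<mu>\<^sup>2/64)"
  define c where "c = sqrt v"
  have v0: "0 < v" using assms by (simp add: v_def less_max_iff_disj)
  have c2: "c\<^sup>2 = v" unfolding c_def using v0 by simp
  have c0: "0 < c" unfolding c_def using v0 by simp
  have l2: "0 < t * ln 2" using t by simp
  have m2: "0 < \<mu>\<^sup>2" using assms by simp
  have "v < \<mu>\<^sup>2/16" unfolding v_def max_less_iff_conj using l2 m2 by linarith
  then have "c\<^sup>2 < (\<mu>/4)\<^sup>2" using c2 by (simp add: power_divide)
  then have cmu: "c < \<mu>/4" by (rule power2_less_imp_less) (use assms in simp)
  have "\<mu>\<^sup>2/16 - 2 * t * ln 2 \<le> c\<^sup>2" using c2 by (simp add: v_def)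
  then have "- c\<^sup>2 / (2 * t) \<le> ln 2 + (- \<mu>\<^sup>2 / (32 * t))" using t by (simp add: field_simps)
  then have "exp (- c\<^sup>2 / (2 * t)) \<le> exp (ln 2 + (- \<mu>\<^sup>2 / (32 * t)))" by simp
  also have "\<dots> = 2 * exp (- \<mu>\<^sup>2 / (32 * t))" by (simp only: exp_add exp_ln_iff) simp
  finally have cexp: "1 - 4 * exp (- \<mu>\<^sup>2 / (32 * t)) \<le> 1 - 2 * exp (- c\<^sup>2 / (2 * t))" by simp
  define G where "G = {\<omega>\<in>space M. \<forall>m. \<forall>j\<in>{..(2::nat)^m}. \<bar>W (real j * t / 2^m) \<omega>\<bar> \<le> c}"
  have gb: "1 - 2 * exp (- c\<^sup>2 / (2 * t)) \<le> measure M G"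
    unfolding G_def by (rule grid_bound[OF BM t c0])
  have xim[measurable]: "\<xi> \<in> borel_measurable M" using ES by (simp add: entrance_sol_def)
  have AE1: "AE \<omega> in M.
        0 < \<xi> \<omega> \<and>
        continuous_on {t. 0 < t \<and> ereal t < \<xi> \<omega>} (\<lambda>t. q t \<omega>) \<and>
        (\<forall>s t. 0 < s \<and> s \<le> t \<and> ereal t < \<xi> \<omega> \<longrightarrow>
           q t \<omega> = q s \<omega> + (W t \<omega> - W s \<omega>)
                     + integral {s..t} (\<lambda>r. drift a \<mu> \<beta> r (q r \<omega>))) \<and>
        filterlim (\<lambda>t. q t \<omega>) at_top (at_right 0) \<and>
        (\<xi> \<omega> < \<infinity> \<longrightarrow>
           filterlim (\<lambda>t. q t \<omega>) at_bot (at_left (real_of_ereal (\<xi> \<omega>))))"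
    using ES by (simp add: entrance_sol_def)
  have AE2: "AE \<omega> in M. continuous_on {0..} (\<lambda>t. W t \<omega>)" by (rule std_BM_facts(4)[OF BM])
  have "AE \<omega> in M. \<omega> \<in> G \<longrightarrow> \<omega> \<in> {\<omega> \<in> space M. ereal t < \<xi> \<omega>}"
    using AE1 AE2
  proof eventually_elim
    case (elim \<omega>)
    show ?case
    proof
      assume "\<omega> \<in> G"
      then have \<omega>: "\<omega> \<in> space M" and grid: "\<And>m j. j \<le> (2::nat)^m \<Longrightarrow> \<bar>W (real j * t / 2^m) \<omega>\<bar> \<le> c"
        by (auto simp: G_def)
      have wb: "\<bar>W r \<omega>\<bar> \<le> c" if "0 \<le> r" "r \<le> t" for r
        by (rule dense_bound[OF elim(2) t grid that])
      have "ereal t < \<xi> \<omega>"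
      proof (rule ccontr)
        assume "\<not> ereal t < \<xi> \<omega>"
        then have le: "\<xi> \<omega> \<le> ereal t" by simp
        have pos: "0 < \<xi> \<omega>" using elim(1) by blast
        obtain T where T: "\<xi> \<omega> = ereal T" using le pos by (cases "\<xi> \<omega>") auto
        have T0: "0 < T" "T \<le> t" using le pos T by auto
        have qc: "continuous_on {r. 0 < r \<and> r < T} (\<lambda>r. q r \<omega>)" using elim(1) T by simp
        have eq: "\<And>s r. 0 < s \<Longrightarrow> s \<le> r \<Longrightarrow> r < T \<Longrightarrow> q r \<omega> = q s \<omega> + (W r \<omega> - W s \<omega>) + integral {s..r} (\<lambda>x. drift a \<mu> \<beta> x (q x \<omega>))"
          using elim(1) T by auto
        have top: "filterlim (\<lambda>r. q r \<omega>) at_top (at_right 0)" using elim(1) by blast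
        have bot: "filterlim (\<lambda>r. q r \<omega>) at_bot (at_left T)" using elim(1) T by simp
        show False
          by (rule pathwise[OF assms(2) conjunct1[OF b] dpos T0 qc eq top bot wb cmu]) auto
      qed
      then show "\<omega> \<in> {\<omega> \<in> space M. ereal t < \<xi> \<omega>}" using \<omega> by simp
    qed
  qed
  then have "measure M G \<le> measure M {\<omega> \<in> space M. ereal t < \<xi> \<omega>}"
    by (rule finite_measure_mono_AE) measurable
  then show "1 - 4 * exp (- \<mu>\<^sup>2 / (32 * t)) \<le> measure M {\<omega> \<in> space M. ereal t < \<xi> \<omega>}"
    using cexp gb by linarith
qed


end
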